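(* Let $\phi:\mathcal M_1\to\mathcal M_2$ be a homomorphism of local Moufang sets, with $\mathcal M_1=(X,(U_x))$, and let $\theta_x:U_x\to V_{x\phi}$ ($x\in X$) be the induced group homomorphisms. The following are equivalent: (i) $\phi$ is surjective; (ii) $\theta_x$ is surjective for all $x\in X$; (iii) $\theta_x$ is surjective for some $x\in X$.
   Context: Group actions are right actions; maps are composed left to right, so $u\phi$ means first $u$ then $\phi$. For $(X,\sim)$, $\overline x$ is the class of $x$, $\overline X$ the set of classes, $\mathrm{Sym}(X,\sim)$ the bijections $g$ with $x\sim y\iff xg\sim yg$, $\overline U$ the induced group on $\overline X$. A local Moufang set is $(X,\sim)$ with $|\overline X|>2$ and subgroups $U_x\le\mathrm{Sym}(X,\sim)$ ($x\in X$) with: (LM0) $x\sim y\Rightarrow\overline{U_x}=\overline{U_y}$; (LM1) $U_x$ fixes $x$ and is sharply transitive on $X\setminus\overline x$; (LM1') $\overline{U_x}$ fixes $\overline x$ and is sharply transitive on $\overline X\setminus\{\overline x\}$; (LM2) $U_x^g=U_{xg}$ for all $x$ and all $g\in\langle U_y\rangle$, where $g^h=h^{-1}gh$. A homomorphism $\mathcal M_1=(X,(U_x))\to\mathcal M_2=(Y,(V_y))$ is a map $\phi:X\to Y$ such that $x\sim x'\iff x\phi\sim x'\phi$ for all $x,x'\in X$, and $U_x\phi\subseteq\phi V_{x\phi}$ for all $x$. For each $x\in X$ the induced map $\theta_x:U_x\to V_{x\phi}$ is the unique map with $u\phi=\phi\,\theta_x(u)$ for all $u\in U_x$ (it exists and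 is a group homomorphism). *)

theory Defs
  imports "HOL-Algebra.Algebra"
begin

text \<open>Group elements are permutations of the carrier A, represented (as in
  HOL-Algebra's BijGroup) by extensional bijections A -> A.  The right action
  x g of the paper is the function application g x.  The multiplication of
  BijGroup is composition g o f (first f, then g); conjugation
  U^g = g^-1 U g (first g^-1, then u, then g) is therefore
  g \<otimes> u \<otimes> inv g in BijGroup.\<close>

definition Sym_equiv :: "'a set \<Rightarrow> ('a \<times> 'a) set \<Rightarrow> ('a \<Rightarrow> 'a) set" where
  "Sym_equiv A R = {g \<in> Bij A. \<forall>x\<in>A. \<forall>y\<in>A. (x, y) \<in> R \<longleftrightarrow> (g x, g y) \<in> R}"

definition induced_perm :: "'a set \<Rightarrow> ('a \<times> 'a) set \<Rightarrow> ('a \<Rightarrow> 'a) \<Rightarrow> ('a set \<Rightarrow> 'a set)" where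
  "induced_perm A R g = (\<lambda>C \<in> A // R. g ` C)"

definition conj_set :: "'a set \<Rightarrow> ('a \<Rightarrow> 'a) \<Rightarrow> ('a \<Rightarrow> 'a) set \<Rightarrow> ('a \<Rightarrow> 'a) set" where
  "conj_set A g U = {g \<otimes>\<^bsub>BijGroup A\<^esub> u \<otimes>\<^bsub>BijGroup A\<^esub> inv\<^bsub>BijGroup A\<^esub> g | u. u \<in> U}"

definition local_moufang_set ::
  "'a set \<Rightarrow> ('a \<times> 'a) set \<Rightarrow> ('a \<Rightarrow> ('a \<Rightarrow> 'a) set) \<Rightarrow> bool" where
  "local_moufang_set A R U \<longleftrightarrow>
     equiv A R \<and>
     (infinite (A // R) \<or> card (A // R) > 2) \<and>
     (\<forall>x\<in>A. subgroup (U x) (BijGroup A) \<and> U x \<subseteq> Sym_equiv A R) \<and>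
     \<comment> \<open>(LM0)\<close>
     (\<forall>x\<in>A. \<forall>y\<in>A. (x, y) \<in> R \<longrightarrow> induced_perm A R ` U x = induced_perm A R ` U y) \<and>
     \<comment> \<open>(LM1)\<close>
     (\<forall>x\<in>A. (\<forall>u\<in>U x. u x = x) \<and>
        (\<forall>y\<in>A - R``{x}. \<forall>z\<in>A - R``{x}. \<exists>!u. u \<in> U x \<and> u y = z)) \<and>
     \<comment> \<open>(LM1')\<close>
     (\<forall>x\<in>A. (\<forall>h\<in>induced_perm A R ` U x. h (R``{x}) = R``{x}) \<and>
        (\<forall>C\<in>A // R - {R``{x}}. \<forall>D\<in>A // R - {R``{x}}.
            \<exists>!h. h \<in> induced_perm A R ` U x \<and> h C = D)) \<and>
     \<comment> \<open>(LM2)\<close>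
     (\<forall>x\<in>A. \<forall>g\<in>generate (BijGroup A) (\<Union>y\<in>A. U y). conj_set A g (U x) = U (g x))"

text \<open>Homomorphism: phi A -> B preserving and reflecting the equivalence,
  with U_x phi \<subseteq> phi V_{x phi}, i.e. for each u there is v with
  phi(u z) = v(phi z) for all z in A.\<close>
definition lms_hom ::
  "'a set \<Rightarrow> ('a \<times> 'a) set \<Rightarrow> ('a \<Rightarrow> ('a \<Rightarrow> 'a) set) \<Rightarrow>
   'b set \<Rightarrow> ('b \<times> 'b) set \<Rightarrow> ('b \<Rightarrow> ('b \<Rightarrow> 'b) set) \<Rightarrow> ('a \<Rightarrow> 'b) \<Rightarrow> bool" where
  "lms_hom A R U B S V \<phi> \<longleftrightarrow>
     \<phi> \<in> A \<rightarrow> B \<and>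
     (\<forall>x\<in>A. \<forall>x'\<in>A. (x, x') \<in> R \<longleftrightarrow> (\<phi> x, \<phi> x') \<in> S) \<and>
     (\<forall>x\<in>A. \<forall>u\<in>U x. \<exists>v\<in>V (\<phi> x). \<forall>z\<in>A. \<phi> (u z) = v (\<phi> z))"

definition induced_hom ::
  "'a set \<Rightarrow> ('b \<Rightarrow> ('b \<Rightarrow> 'b) set) \<Rightarrow> ('a \<Rightarrow> 'b) \<Rightarrow> 'a \<Rightarrow> ('a \<Rightarrow> 'a) \<Rightarrow> ('b \<Rightarrow> 'b)" where
  "induced_hom A V \<phi> x u = (THE v. v \<in> V (\<phi> x) \<and> (\<forall>z\<in>A. \<phi> (u z) = v (\<phi> z)))"

end

theory Submission
  imports Defs
begin

lemma lm_facts: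
  assumes "local_moufang_set B S V"
  shows "equiv B S" "infinite (B // S) \<or> card (B // S) > 2"
    "\<And>b v. b \<in> B \<Longrightarrow> v \<in> V b \<Longrightarrow> v \<in> Sym_equiv B S"
    "\<And>b v. b \<in> B \<Longrightarrow> v \<in> V b \<Longrightarrow> v b = b"
    "\<And>b c d. b \<in> B \<Longrightarrow> c \<in> B - S``{b} \<Longrightarrow> d \<in> B - S``{b} \<Longrightarrow> \<exists>!v. v \<in> V b \<and> v c = d"
proof -
  note D = assms[unfolded local_moufang_set_def]
  note c3 = D[THEN conjunct2, THEN conjunct2, THEN conjunct1]
  note c5 = D[THEN conjunct2, THEN conjunct2, THEN conjunct2, THEN conjunct2, THEN conjunct1]
  show "equiv B S" using D by (rule conjunct1)
  show "infinite (B // S) \<or> card (B // S) > 2" using D[THEN conjunct2] by (rule conjunct1)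
  fix b v assume b: "b \<in> B" and v: "v \<in> V b"
  have "V b \<subseteq> Sym_equiv B S" using bspec[OF c3 b] by (rule conjunct2)
  thus "v \<in> Sym_equiv B S" using v by (rule subsetD)
  have "\<forall>u\<in>V b. u b = b" using bspec[OF c5 b] by (rule conjunct1)
  thus "v b = b" using v by (rule bspec)
next
  note D = assms[unfolded local_moufang_set_def]
  note c5 = D[THEN conjunct2, THEN conjunct2, THEN conjunct2, THEN conjunct2, THEN conjunct1]
  fix b c d assume b: "b \<in> B" and c: "c \<in> B - S``{b}" and d: "d \<in> B - S``{b}"
  have "\<forall>y\<in>B - S``{b}. \<forall>z\<in>B - S``{b}. \<exists>!u. u \<in> V b \<and> u y = z"
    using bspec[OF c5 b] by (rule conjunct2)
  thus "\<exists>!v. v \<in> V b \<and> v c = d" using c d by blast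
qed

lemma lm_maps:
  assumes "local_moufang_set B S V" "b \<in> B" "v \<in> V b" "c \<in> B"
  shows "v c \<in> B" "(b, c) \<in> S \<longleftrightarrow> (b, v c) \<in> S"
proof -
  have v: "v \<in> Sym_equiv B S" using lm_facts(3)[OF assms(1,2,3)] .
  hence "bij_betw v B B" unfolding Sym_equiv_def Bij_def by auto
  thus "v c \<in> B" using assms(4) bij_betwE by blast
  have "(b, c) \<in> S \<longleftrightarrow> (v b, v c) \<in> S" using v assms(2,4) unfolding Sym_equiv_def by blast
  thus "(b, c) \<in> S \<longleftrightarrow> (b, v c) \<in> S" using lm_facts(4)[OF assms(1,2,3)] by simp
qed

lemma lm_surj:
  assumes "local_moufang_set B S V" "b \<in> B" "v \<in> V b" "d \<in> B"
  shows "\<exists>c\<in>B. v c = d"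
proof -
  have v: "v \<in> Sym_equiv B S" using lm_facts(3)[OF assms(1,2,3)] .
  hence "bij_betw v B B" unfolding Sym_equiv_def Bij_def by auto
  hence "v ` B = B" by (rule bij_betw_imp_surj_on)
  hence "d \<in> v ` B" using assms(4) by simp
  thus ?thesis by (rule imageE) blast
qed

lemma lm_unique:
  assumes "local_moufang_set B S V" "b \<in> B" "v \<in> V b" "v' \<in> V b" "c \<in> B"
    "(b, c) \<notin> S" "v c = v' c"
  shows "v = v'"
proof -
  have "v c \<in> B - S``{b}" using lm_maps[OF assms(1,2,3,5)] assms(6) by auto
  moreover have "c \<in> B - S``{b}" using assms(5,6) by auto
  ultimately have "\<exists>!w. w \<in> V b \<and> w c = v c" using lm_facts(5)[OF assms(1,2)] by blast
  then obtain w where wq: "\<And>y. y \<in> V b \<and> y c = v c \<Longrightarrow> y = w" by (elim ex1E) blast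
  have "v = w" by (rule wq) (simp add: assms(3))
  moreover have "v' = w" by (rule wq) (simp add: assms(4,7))
  ultimately show ?thesis by simp
qed

lemma lm_exists:
  assumes "local_moufang_set B S V" "b \<in> B" "c \<in> B" "d \<in> B" "(b, c) \<notin> S" "(b, d) \<notin> S"
  shows "\<exists>v\<in>V b. v c = d"
proof -
  have "\<exists>!v. v \<in> V b \<and> v c = d" using lm_facts(5)[OF assms(1,2), of c d] assms(3-6) by simp
  then obtain v where "v \<in> V b" "v c = d" by (elim ex1E) blast
  thus ?thesis by blast
qed

lemma third:
  assumes "local_moufang_set A R U" "x \<in> A" "y \<in> A"
  shows "\<exists>z\<in>A. (x, z) \<notin> R \<and> (y, z) \<notin> R"
proof -
  have eq: "equiv A R" using lm_facts(1)[OF assms(1)] .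
  have big: "infinite (A // R) \<or> card (A // R) > 2"
    using lm_facts(2)[OF assms(1)] .
  have ne: "A // R - {R``{x}, R``{y}} \<noteq> {}"
  proof
    assume "A // R - {R``{x}, R``{y}} = {}"
    hence sub: "A // R \<subseteq> {R``{x}, R``{y}}" by (simp only: Diff_eq_empty_iff)
    have fin: "finite (A // R)" using finite_subset[OF sub] by simp
    have "card (A // R) \<le> card {R``{x}, R``{y}}" using card_mono[OF _ sub] by simp
    also have "\<dots> \<le> 2" by (simp add: card_insert_if)
    finally show False using big fin by simp
  qed
  then obtain E where E: "E \<in> A // R" "E \<noteq> R``{x}" "E \<noteq> R``{y}" by auto
  from E(1) obtain z where z: "z \<in> A" "E = R``{z}" by (rule quotientE)
  have "(x, z) \<notin> R"
  proof
    assume "(x, z) \<in> R" hence "R``{x} = R``{z}" by (rule equiv_class_eq[OF eq])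
    thus False using E z by simp
  qed
  moreover have "(y, z) \<notin> R"
  proof
    assume "(y, z) \<in> R" hence "R``{y} = R``{z}" by (rule equiv_class_eq[OF eq])
    thus False using E z by simp
  qed
  ultimately show ?thesis using z by blast
qed

lemma hom_facts:
  assumes "lms_hom A R U B S V \<phi>"
  shows "\<And>a. a \<in> A \<Longrightarrow> \<phi> a \<in> B"
    "\<And>a a'. a \<in> A \<Longrightarrow> a' \<in> A \<Longrightarrow> (a, a') \<in> R \<longleftrightarrow> (\<phi> a, \<phi> a') \<in> S"
    "\<And>x u. x \<in> A \<Longrightarrow> u \<in> U x \<Longrightarrow> \<exists>v\<in>V (\<phi> x). \<forall>z\<in>A. \<phi> (u z) = v (\<phi> z)"
proof -
  note D = assms[unfolded lms_hom_def]
  note c1 = D[THEN conjunct1] and c2 = D[THEN conjunct2, THEN conjunct1]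
    and c3 = D[THEN conjunct2, THEN conjunct2]
  show "\<And>a. a \<in> A \<Longrightarrow> \<phi> a \<in> B" using c1 by (rule funcset_mem)
  show "\<And>a a'. a \<in> A \<Longrightarrow> a' \<in> A \<Longrightarrow> (a, a') \<in> R \<longleftrightarrow> (\<phi> a, \<phi> a') \<in> S"
    using c2 by blast
  show "\<And>x u. x \<in> A \<Longrightarrow> u \<in> U x \<Longrightarrow> \<exists>v\<in>V (\<phi> x). \<forall>z\<in>A. \<phi> (u z) = v (\<phi> z)"
    using c3 by blast
qed

lemma theta:
  assumes A: "local_moufang_set A R U" and B: "local_moufang_set B S V"
    and h: "lms_hom A R U B S V \<phi>" and x: "x \<in> A" and u: "u \<in> U x"
  shows "induced_hom A V \<phi> x u \<in> V (\<phi> x) \<and> (\<forall>z\<in>A. \<phi> (u z) = induced_hom A V \<phi> x u (\<phi> z))"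
proof -
  note phiB = hom_facts(1)[OF h]
  note refl = hom_facts(2)[OF h]
  obtain v where v: "v \<in> V (\<phi> x)" "\<forall>z\<in>A. \<phi> (u z) = v (\<phi> z)"
    using hom_facts(3)[OF h x u] by blast
  obtain y where y: "y \<in> A" "(x, y) \<notin> R" using third[OF A x x] by blast
  have "\<exists>!v. v \<in> V (\<phi> x) \<and> (\<forall>z\<in>A. \<phi> (u z) = v (\<phi> z))"
  proof (rule ex1I[of _ v])
    show "v \<in> V (\<phi> x) \<and> (\<forall>z\<in>A. \<phi> (u z) = v (\<phi> z))" using v by blast
  next
    fix w assume w: "w \<in> V (\<phi> x) \<and> (\<forall>z\<in>A. \<phi> (u z) = w (\<phi> z))"
    have n: "(\<phi> x, \<phi> y) \<notin> S" using refl[OF x y(1)] y(2) by simp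
    have e: "w (\<phi> y) = v (\<phi> y)" using w v(2) y(1) by metis
    have wV: "w \<in> V (\<phi> x)" using w by (rule conjunct1)
    show "w = v" by (rule lm_unique[OF B phiB[OF x] wV v(1) phiB[OF y(1)] n e])
  qed
  thus ?thesis unfolding induced_hom_def by (rule theI')
qed

theorem mainTheorem10:
  fixes A :: "'a set" and R :: "('a \<times> 'a) set" and U :: "'a \<Rightarrow> ('a \<Rightarrow> 'a) set"
    and B :: "'b set" and S :: "('b \<times> 'b) set" and V :: "'b \<Rightarrow> ('b \<Rightarrow> 'b) set"
    and \<phi> :: "'a \<Rightarrow> 'b"
  assumes "local_moufang_set A R U" and "local_moufang_set B S V"
    and "lms_hom A R U B S V \<phi>"
  shows "(\<phi> ` A = B \<longleftrightarrow> (\<forall>x\<in>A. induced_hom A V \<phi> x ` U x = V (\<phi> x)))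
       \<and> ((\<forall>x\<in>A. induced_hom A V \<phi> x ` U x = V (\<phi> x))
            \<longleftrightarrow> (\<exists>x\<in>A. induced_hom A V \<phi> x ` U x = V (\<phi> x)))"
proof -
  note A = assms(1) and B = assms(2) and h = assms(3)
  note phiB = hom_facts(1)[OF h]
  note refl = hom_facts(2)[OF h]
  have eqB: "equiv B S" using lm_facts(1)[OF B] .
  let ?th = "induced_hom A V \<phi>"
  have sub: "\<And>x. x \<in> A \<Longrightarrow> ?th x ` U x \<subseteq> V (\<phi> x)" using theta[OF A B h] by blast
  have Ane: "A \<noteq> {}"
  proof
    assume "A = {}" hence "A // R = {}" by (simp add: quotient_def)
    thus False using lm_facts(2)[OF A] by simp
  qed
  have S1: "\<And>x b. x \<in> A \<Longrightarrow> ?th x ` U x = V (\<phi> x) \<Longrightarrow> b \<in> B \<Longrightarrow> (\<phi> x, b) \<notin> S \<Longrightarrow> b \<in> \<phi> ` A"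
  proof -
    fix x b assume x: "x \<in> A" and s: "?th x ` U x = V (\<phi> x)" and b: "b \<in> B" "(\<phi> x, b) \<notin> S"
    obtain y where y: "y \<in> A" "(x, y) \<notin> R" using third[OF A x x] by blast
    have n: "(\<phi> x, \<phi> y) \<notin> S" using refl[OF x y(1)] y(2) by simp
    obtain v where v: "v \<in> V (\<phi> x)" "v (\<phi> y) = b"
      using lm_exists[OF B phiB[OF x] phiB[OF y(1)] b(1) n b(2)] by blast
    have "v \<in> ?th x ` U x" using s v(1) by simp
    then obtain u where u: "u \<in> U x" "?th x u = v" by (auto elim: imageE)
    have "\<phi> (u y) = ?th x u (\<phi> y)" using theta[OF A B h x u(1)] y(1) by blast
    hence "\<phi> (u y) = b" using u(2) v(2) by simp
    moreover have "u y \<in> A" using lm_facts(3)[OF A x u(1)] y(1)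
      unfolding Sym_equiv_def Bij_def bij_betw_def by auto
    ultimately show "b \<in> \<phi> ` A" by blast
  qed
  have I2: "\<phi> ` A = B \<Longrightarrow> \<forall>x\<in>A. ?th x ` U x = V (\<phi> x)"
  proof
    fix x assume surj: "\<phi> ` A = B" and x: "x \<in> A"
    show "?th x ` U x = V (\<phi> x)"
    proof
      show "?th x ` U x \<subseteq> V (\<phi> x)" using sub x .
      show "V (\<phi> x) \<subseteq> ?th x ` U x"
      proof
        fix v assume v: "v \<in> V (\<phi> x)"
        obtain y where y: "y \<in> A" "(x, y) \<notin> R" using third[OF A x x] by blast
        have n: "(\<phi> x, \<phi> y) \<notin> S" using refl[OF x y(1)] y(2) by simp
        have vy: "v (\<phi> y) \<in> B" "(\<phi> x, v (\<phi> y)) \<notin> S"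
          using lm_maps[OF B phiB[OF x] v phiB[OF y(1)]] n by auto
        hence "v (\<phi> y) \<in> \<phi> ` A" using surj by simp
        then obtain z where z: "z \<in> A" "\<phi> z = v (\<phi> y)" by (auto elim: imageE)
        have "(x, z) \<notin> R" using refl[OF x z(1)] z vy by simp
        then obtain u where u: "u \<in> U x" "u y = z"
          using lm_exists[OF A x y(1) z(1) y(2)] by blast
        have t1: "?th x u \<in> V (\<phi> x)" "\<phi> (u y) = ?th x u (\<phi> y)"
          using theta[OF A B h x u(1)] y(1) by blast+
        have t: "?th x u \<in> V (\<phi> x)" "?th x u (\<phi> y) = v (\<phi> y)"
          using t1 u(2) z(2) by simp_all
        have n: "(\<phi> x, \<phi> y) \<notin> S" using refl[OF x y(1)] y(2) by simp
        have "?th x u = v" by (rule lm_unique[OF B phiB[OF x] t(1) v phiB[OF y(1)] n t(2)])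
        thus "v \<in> ?th x ` U x" using u by blast
      qed
    qed
  qed
  have I3: "\<And>x. x \<in> A \<Longrightarrow> ?th x ` U x = V (\<phi> x) \<Longrightarrow> \<phi> ` A = B"
  proof
    fix x assume x: "x \<in> A" and s: "?th x ` U x = V (\<phi> x)"
    show "\<phi> ` A \<subseteq> B" using phiB by blast
    show "B \<subseteq> \<phi> ` A"
    proof
      fix b assume b: "b \<in> B"
      show "b \<in> \<phi> ` A"
      proof (cases "(\<phi> x, b) \<in> S")
        case False thus ?thesis using S1[OF x s b] by blast
      next
        case True
        obtain y where y: "y \<in> A" "(x, y) \<notin> R" using third[OF A x x] by blast
        obtain z where z: "z \<in> A" "(x, z) \<notin> R" "(y, z) \<notin> R" using third[OF A x y(1)] by blast
        have yx: "(y, x) \<notin> R" using y(2) lm_facts(1)[OF A] unfolding equiv_def sym_def by blast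
        obtain u where u: "u \<in> U y" "u x = z" using lm_exists[OF A y(1) x z(1) yx z(3)] by blast
        define w where "w = ?th y u"
        have w: "w \<in> V (\<phi> y)" "\<forall>a\<in>A. \<phi> (u a) = w (\<phi> a)"
          using theta[OF A B h y(1) u(1)] unfolding w_def by auto
        obtain c where c: "c \<in> B" "w c = b" using lm_surj[OF B phiB[OF y(1)] w(1) b] by blast
        have "(\<phi> x, c) \<notin> S"
        proof
          assume "(\<phi> x, c) \<in> S"
          hence "(c, \<phi> x) \<in> S" using eqB unfolding equiv_def sym_def by blast
          hence "(w c, w (\<phi> x)) \<in> S" using lm_facts(3)[OF B phiB[OF y(1)] w(1)] c phiB[OF x]
            unfolding Sym_equiv_def by blast
          moreover have "w (\<phi> x) = \<phi> z" using w(2) x u(2) by metis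
          ultimately have "(b, \<phi> z) \<in> S" using c(2) by simp
          hence "(\<phi> x, \<phi> z) \<in> S" using True eqB unfolding equiv_def trans_def by blast
          thus False using refl[OF x z(1)] z(2) by simp
        qed
        then obtain a where a: "a \<in> A" "c = \<phi> a" using S1[OF x s c(1)] by blast
        have "b = \<phi> (u a)" using w(2) a c by simp
        moreover have "u a \<in> A" using lm_facts(3)[OF A y(1) u(1)] a(1)
          unfolding Sym_equiv_def Bij_def bij_betw_def by auto
        ultimately show ?thesis by blast
      qed
    qed
  qed
  obtain x0 where x0: "x0 \<in> A" using Ane by blast
  show ?thesis
  proof (intro conjI iffI)
    assume "\<phi> ` A = B" thus "\<forall>x\<in>A. ?th x ` U x = V (\<phi> x)" by (rule I2)
  next
    assume a: "\<forall>x\<in>A. ?th x ` U x = V (\<phi> x)"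
    show "\<phi> ` A = B" by (rule I3[OF x0]) (use a x0 in blast)
  next
    assume a: "\<forall>x\<in>A. ?th x ` U x = V (\<phi> x)"
    show "\<exists>x\<in>A. ?th x ` U x = V (\<phi> x)" using a x0 by blast
  next
    assume "\<exists>x\<in>A. ?th x ` U x = V (\<phi> x)"
    then obtain x where "x \<in> A" "?th x ` U x = V (\<phi> x)" by blast
    hence "\<phi> ` A = B" by (rule I3)
    thus "\<forall>x\<in>A. ?th x ` U x = V (\<phi> x)" by (rule I2)
  qed
qed

end
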